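(* Let $R=\prod_{i=1}^nR_i$ be a direct product of left localization maximal rings $R_1,\ldots,R_n$. Then every nonzero element of $R$ is left localizable if and only if $R_1,\ldots,R_n$ are division rings.
   Context: All rings are associative with $1$. A multiplicative subset $S$ of $R$ ($1\in S$, $0\notin S$, closed under multiplication) is a left Ore set if $Sr\cap Rs\neq\emptyset$ for all $r\in R$, $s\in S$; for it, $\mathrm{ass}(S):=\{r\in R: sr=0\text{ for some } s\in S\}$. A left Ore set $S$ is a left denominator set if $rs=0$ ($r\in R$, $s\in S$) implies $tr=0$ for some $t\in S$; $\mathrm{Den}_l(R)$ denotes the set of left denominator sets. An element $r\in R$ is left localizable if $r\in S$ for some $S\in\mathrm{Den}_l(R)$. For a ring $A$, $S_0(A)$ is the largest left Ore set of $A$ consisting of regular elements and $Q_l(A):=S_0(A)^{-1}A$. A ring $A$ is a left localization maximal ring if $A=Q_l(A)$ (i.e. $S_0(A)$ consists of units) and $\{\mathrm{ass}(S):S\in\mathrm{Den}_l(A)\}=\{0\}$. *)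

theory Defs
  imports "HOL-Algebra.Ring"
begin

definition mult_subset :: "('a, 'b) ring_scheme \<Rightarrow> 'a set \<Rightarrow> bool" where
  "mult_subset R S \<longleftrightarrow> S \<subseteq> carrier R \<and> \<one>\<^bsub>R\<^esub> \<in> S \<and> \<zero>\<^bsub>R\<^esub> \<notin> S \<and>
     (\<forall>s\<in>S. \<forall>t\<in>S. s \<otimes>\<^bsub>R\<^esub> t \<in> S)"

definition left_Ore :: "('a, 'b) ring_scheme \<Rightarrow> 'a set \<Rightarrow> bool" where
  "left_Ore R S \<longleftrightarrow> mult_subset R S \<and>
     (\<forall>r\<in>carrier R. \<forall>s\<in>S. \<exists>s'\<in>S. \<exists>r'\<in>carrier R. s' \<otimes>\<^bsub>R\<^esub> r = r' \<otimes>\<^bsub>R\<^esub> s)"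

definition ass :: "('a, 'b) ring_scheme \<Rightarrow> 'a set \<Rightarrow> 'a set" where
  "ass R S = {r \<in> carrier R. \<exists>s\<in>S. s \<otimes>\<^bsub>R\<^esub> r = \<zero>\<^bsub>R\<^esub>}"

definition left_denominator :: "('a, 'b) ring_scheme \<Rightarrow> 'a set \<Rightarrow> bool" where
  "left_denominator R S \<longleftrightarrow> left_Ore R S \<and>
     (\<forall>r\<in>carrier R. \<forall>s\<in>S. r \<otimes>\<^bsub>R\<^esub> s = \<zero>\<^bsub>R\<^esub> \<longrightarrow> (\<exists>t\<in>S. t \<otimes>\<^bsub>R\<^esub> r = \<zero>\<^bsub>R\<^esub>))"

definition Den_l :: "('a, 'b) ring_scheme \<Rightarrow> 'a set set" where
  "Den_l R = {S. left_denominator R S}"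

definition left_localizable :: "('a, 'b) ring_scheme \<Rightarrow> 'a \<Rightarrow> bool" where
  "left_localizable R r \<longleftrightarrow> (\<exists>S\<in>Den_l R. r \<in> S)"

definition regular_elems :: "('a, 'b) ring_scheme \<Rightarrow> 'a set" where
  "regular_elems R = {r \<in> carrier R. \<forall>x\<in>carrier R.
     (r \<otimes>\<^bsub>R\<^esub> x = \<zero>\<^bsub>R\<^esub> \<longrightarrow> x = \<zero>\<^bsub>R\<^esub>) \<and> (x \<otimes>\<^bsub>R\<^esub> r = \<zero>\<^bsub>R\<^esub> \<longrightarrow> x = \<zero>\<^bsub>R\<^esub>)}"

text \<open>S_0(A): the largest left Ore set consisting of regular elements, i.e. the
union of all such sets (which is itself one of them).\<close>
definition S0 :: "('a, 'b) ring_scheme \<Rightarrow> 'a set" where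
  "S0 R = \<Union>{S. left_Ore R S \<and> S \<subseteq> regular_elems R}"

definition left_loc_maximal :: "('a, 'b) ring_scheme \<Rightarrow> bool" where
  "left_loc_maximal R \<longleftrightarrow> S0 R \<subseteq> Units R \<and>
     {ass R S | S. S \<in> Den_l R} = {{\<zero>\<^bsub>R\<^esub>}}"

definition division_ring :: "('a, 'b) ring_scheme \<Rightarrow> bool" where
  "division_ring R \<longleftrightarrow> ring R \<and> \<one>\<^bsub>R\<^esub> \<noteq> \<zero>\<^bsub>R\<^esub> \<and> carrier R - {\<zero>\<^bsub>R\<^esub>} \<subseteq> Units R"

text \<open>Direct product of the rings R 0, ..., R (n-1) (componentwise operations,
elements are extensional functions on {..<n}).\<close>
definition prod_ring :: "nat \<Rightarrow> (nat \<Rightarrow> ('a, 'b) ring_scheme) \<Rightarrow> (nat \<Rightarrow> 'a) ring" where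
  "prod_ring n R =
    \<lparr>carrier = PiE {..<n} (\<lambda>i. carrier (R i)),
     monoid.mult = (\<lambda>f g. \<lambda>i\<in>{..<n}. f i \<otimes>\<^bsub>R i\<^esub> g i),
     one = (\<lambda>i\<in>{..<n}. \<one>\<^bsub>R i\<^esub>),
     zero = (\<lambda>i\<in>{..<n}. \<zero>\<^bsub>R i\<^esub>),
     add = (\<lambda>f g. \<lambda>i\<in>{..<n}. f i \<oplus>\<^bsub>R i\<^esub> g i)\<rparr>"

end

theory Submission
  imports Defs
begin

lemma P_carrier: "carrier (prod_ring n R) = PiE {..<n} (\<lambda>i. carrier (R i))"
  by (simp add: prod_ring_def)
lemma P_mult: "f \<otimes>\<^bsub>prod_ring n R\<^esub> g = (\<lambda>i\<in>{..<n}. f i \<otimes>\<^bsub>R i\<^esub> g i)"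
  by (simp add: prod_ring_def)
lemma P_one: "\<one>\<^bsub>prod_ring n R\<^esub> = (\<lambda>i\<in>{..<n}. \<one>\<^bsub>R i\<^esub>)"
  by (simp add: prod_ring_def)
lemma P_zero: "\<zero>\<^bsub>prod_ring n R\<^esub> = (\<lambda>i\<in>{..<n}. \<zero>\<^bsub>R i\<^esub>)"
  by (simp add: prod_ring_def)

lemma rm_closed: "ring A \<Longrightarrow> x \<in> carrier A \<Longrightarrow> y \<in> carrier A \<Longrightarrow> x \<otimes>\<^bsub>A\<^esub> y \<in> carrier A"
  by (rule ring.ring_simprules)
lemma rone_closed: "ring A \<Longrightarrow> \<one>\<^bsub>A\<^esub> \<in> carrier A"
  by (rule ring.ring_simprules)
lemma rzero_closed: "ring A \<Longrightarrow> \<zero>\<^bsub>A\<^esub> \<in> carrier A"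
  by (rule ring.ring_simprules)
lemma rinv_closed: "ring A \<Longrightarrow> x \<in> Units A \<Longrightarrow> inv\<^bsub>A\<^esub> x \<in> carrier A"
  by (simp add: ring.is_monoid monoid.Units_inv_closed)

lemma llm_ass:
  assumes "left_loc_maximal A" "S \<in> Den_l A"
  shows "ass A S = {\<zero>\<^bsub>A\<^esub>}"
proof -
  have "ass A S \<in> {ass A S | S. S \<in> Den_l A}" using assms(2) by blast
  thus ?thesis using assms(1) unfolding left_loc_maximal_def by simp
qed

lemma div_nozero:
  assumes "division_ring A" "a \<in> carrier A" "s \<in> carrier A" "s \<noteq> \<zero>\<^bsub>A\<^esub>"
    "a \<otimes>\<^bsub>A\<^esub> s = \<zero>\<^bsub>A\<^esub>"
  shows "a = \<zero>\<^bsub>A\<^esub>"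
proof -
  interpret ring A using assms(1) by (simp add: division_ring_def)
  have u: "s \<in> Units A" using assms(1,3,4) by (auto simp: division_ring_def)
  have "a = (a \<otimes>\<^bsub>A\<^esub> s) \<otimes>\<^bsub>A\<^esub> inv\<^bsub>A\<^esub> s"
    using u assms(2) by (simp add: m_assoc Units_r_inv Units_inv_closed Units_closed)
  thus ?thesis using assms(5) u by (simp add: Units_inv_closed)
qed

lemma div_nozero2:
  assumes "division_ring A" "a \<in> carrier A" "s \<in> carrier A" "a \<noteq> \<zero>\<^bsub>A\<^esub>"
    "a \<otimes>\<^bsub>A\<^esub> s = \<zero>\<^bsub>A\<^esub>"
  shows "s = \<zero>\<^bsub>A\<^esub>"
proof -
  interpret ring A using assms(1) by (simp add: division_ring_def)
  have u: "a \<in> Units A" using assms(1,2,4) by (auto simp: division_ring_def)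
  have "s = inv\<^bsub>A\<^esub> a \<otimes>\<^bsub>A\<^esub> (a \<otimes>\<^bsub>A\<^esub> s)"
    using u assms(3) by (simp add: m_assoc[symmetric] Units_l_inv Units_inv_closed Units_closed)
  thus ?thesis using assms(5) u by (simp add: Units_inv_closed)
qed

lemma dir2:
  assumes rings: "\<forall>i<n. ring (R i)" and divs: "\<forall>i<n. division_ring (R i)"
    and r: "r \<in> carrier (prod_ring n R)" "r \<noteq> \<zero>\<^bsub>prod_ring n R\<^esub>"
  shows "left_localizable (prod_ring n R) r"
proof -
  let ?P = "prod_ring n R"
  define I where "I = {i. i < n \<and> r i \<noteq> \<zero>\<^bsub>R i\<^esub>}"
  have rP: "r \<in> PiE {..<n} (\<lambda>i. carrier (R i))" using r P_carrier by metis
  have "I \<noteq> {}"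
  proof
    assume "I = {}"
    hence "\<forall>i\<in>{..<n}. r i = \<zero>\<^bsub>R i\<^esub>" unfolding I_def by auto
    hence "r = (\<lambda>i\<in>{..<n}. \<zero>\<^bsub>R i\<^esub>)" using rP
      by (metis PiE_restrict restrict_ext)
    thus False using r(2) by (simp add: P_zero)
  qed
  then obtain i0 where i0: "i0 \<in> I" by blast
  define S where "S = {s \<in> carrier ?P. \<forall>i\<in>I. s i \<noteq> \<zero>\<^bsub>R i\<^esub>}"
  have Isub: "\<And>i. i \<in> I \<Longrightarrow> i < n" unfolding I_def by auto
  have dr: "\<And>i. i < n \<Longrightarrow> division_ring (R i)" using divs by auto
  have rg: "\<And>i. i < n \<Longrightarrow> ring (R i)" using rings by auto
  have one10: "\<And>i. i < n \<Longrightarrow> \<one>\<^bsub>R i\<^esub> \<noteq> \<zero>\<^bsub>R i\<^esub>" using dr by (simp add: division_ring_def)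
  have carrP: "\<And>f. f \<in> carrier ?P \<longleftrightarrow> (\<forall>i<n. f i \<in> carrier (R i)) \<and> (\<forall>i. i \<ge> n \<longrightarrow> f i = undefined)"
    by (auto simp: P_carrier PiE_def extensional_def)
  have multc: "\<And>f g. f \<in> carrier ?P \<Longrightarrow> g \<in> carrier ?P \<Longrightarrow> f \<otimes>\<^bsub>?P\<^esub> g \<in> carrier ?P"
    using rg by (auto simp: carrP P_mult intro: rm_closed)
  have ms: "mult_subset ?P S"
    unfolding mult_subset_def
  proof (intro conjI ballI)
    show "S \<subseteq> carrier ?P" unfolding S_def by auto
    show "\<one>\<^bsub>?P\<^esub> \<in> S" unfolding S_def using rg one10 Isub
      by (auto simp: carrP P_one intro: rone_closed)
    show "\<zero>\<^bsub>?P\<^esub> \<notin> S" unfolding S_def using i0 Isub by (auto simp: P_zero)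
  next
    fix s t assume s: "s \<in> S" and t: "t \<in> S"
    show "s \<otimes>\<^bsub>?P\<^esub> t \<in> S" unfolding S_def
    proof (intro CollectI conjI ballI)
      show "s \<otimes>\<^bsub>?P\<^esub> t \<in> carrier ?P" using s t multc unfolding S_def by auto
    next
      fix i assume i: "i \<in> I"
      have c: "s i \<in> carrier (R i)" "t i \<in> carrier (R i)"
        using s t i Isub unfolding S_def carrP by auto
      have "s i \<otimes>\<^bsub>R i\<^esub> t i \<noteq> \<zero>\<^bsub>R i\<^esub>"
        using div_nozero2[OF dr[OF Isub[OF i]] c] s t i unfolding S_def by auto
      thus "(s \<otimes>\<^bsub>?P\<^esub> t) i \<noteq> \<zero>\<^bsub>R i\<^esub>" using i Isub by (simp add: P_mult)
    qed
  qed
  define e where "e = (\<lambda>i\<in>{..<n}. if i \<in> I then \<one>\<^bsub>R i\<^esub> else \<zero>\<^bsub>R i\<^esub>)"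
  have eS: "e \<in> S" unfolding S_def e_def using rg one10 Isub
    by (auto simp: carrP intro: rone_closed rzero_closed)
  have ore: "\<forall>a\<in>carrier ?P. \<forall>s\<in>S. \<exists>s'\<in>S. \<exists>a'\<in>carrier ?P. s' \<otimes>\<^bsub>?P\<^esub> a = a' \<otimes>\<^bsub>?P\<^esub> s"
  proof (intro ballI)
    fix a s assume a: "a \<in> carrier ?P" and s: "s \<in> S"
    define a' where "a' = (\<lambda>i\<in>{..<n}. if i \<in> I then a i \<otimes>\<^bsub>R i\<^esub> inv\<^bsub>R i\<^esub> (s i) else \<zero>\<^bsub>R i\<^esub>)"
    have su: "\<And>i. i \<in> I \<Longrightarrow> s i \<in> Units (R i)"
    proof -
      fix i assume i: "i \<in> I"
      have "s i \<in> carrier (R i) - {\<zero>\<^bsub>R i\<^esub>}" using s i Isub[OF i] unfolding S_def carrP by auto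
      thus "s i \<in> Units (R i)" using dr[OF Isub[OF i]] unfolding division_ring_def by blast
    qed
    have a'c: "a' \<in> carrier ?P" unfolding a'_def carrP
    proof (intro conjI allI impI)
      fix i assume i: "i < n"
      show "(\<lambda>i\<in>{..<n}. if i \<in> I then a i \<otimes>\<^bsub>R i\<^esub> inv\<^bsub>R i\<^esub> (s i) else \<zero>\<^bsub>R i\<^esub>) i \<in> carrier (R i)"
        using i a su[of i] rg[OF i] by (auto simp: carrP intro: rm_closed rzero_closed rinv_closed)
    qed auto
    have "e \<otimes>\<^bsub>?P\<^esub> a = a' \<otimes>\<^bsub>?P\<^esub> s"
      unfolding P_mult
    proof (rule restrict_ext)
      fix i assume i: "i \<in> {..<n}"
      interpret Ri: ring "R i" using rg i by auto
      have ai: "a i \<in> carrier (R i)" "s i \<in> carrier (R i)" using a s i unfolding S_def carrP by auto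
      show "e i \<otimes>\<^bsub>R i\<^esub> a i = a' i \<otimes>\<^bsub>R i\<^esub> s i"
      proof (cases "i \<in> I")
        case True
        then show ?thesis using i ai su[OF True] unfolding e_def a'_def
          by (simp add: Ri.m_assoc Ri.Units_l_inv Ri.Units_inv_closed)
      next
        case False
        then show ?thesis using i ai unfolding e_def a'_def by simp
      qed
    qed
    thus "\<exists>s'\<in>S. \<exists>a'\<in>carrier ?P. s' \<otimes>\<^bsub>?P\<^esub> a = a' \<otimes>\<^bsub>?P\<^esub> s"
      using eS a'c by blast
  qed
  have den: "\<forall>a\<in>carrier ?P. \<forall>s\<in>S. a \<otimes>\<^bsub>?P\<^esub> s = \<zero>\<^bsub>?P\<^esub> \<longrightarrow> (\<exists>t\<in>S. t \<otimes>\<^bsub>?P\<^esub> a = \<zero>\<^bsub>?P\<^esub>)"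
  proof (intro ballI impI)
    fix a s assume a: "a \<in> carrier ?P" and s: "s \<in> S" and z: "a \<otimes>\<^bsub>?P\<^esub> s = \<zero>\<^bsub>?P\<^esub>"
    have "e \<otimes>\<^bsub>?P\<^esub> a = \<zero>\<^bsub>?P\<^esub>"
      unfolding P_mult P_zero
    proof (rule restrict_ext)
      fix i assume i: "i \<in> {..<n}"
      interpret Ri: ring "R i" using rg i by auto
      have ai: "a i \<in> carrier (R i)" "s i \<in> carrier (R i)" using a s i unfolding S_def carrP by auto
      have zi: "a i \<otimes>\<^bsub>R i\<^esub> s i = \<zero>\<^bsub>R i\<^esub>"
        using fun_cong[OF z, of i] i by (simp add: P_mult P_zero)
      show "e i \<otimes>\<^bsub>R i\<^esub> a i = \<zero>\<^bsub>R i\<^esub>"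
      proof (cases "i \<in> I")
        case True
        have "a i = \<zero>\<^bsub>R i\<^esub>" using div_nozero[OF dr[of i] ai _ zi] i True s unfolding S_def by auto
        then show ?thesis using i True unfolding e_def by simp
      next
        case False
        then show ?thesis using i ai unfolding e_def by simp
      qed
    qed
    thus "\<exists>t\<in>S. t \<otimes>\<^bsub>?P\<^esub> a = \<zero>\<^bsub>?P\<^esub>" using eS by blast
  qed
  have "S \<in> Den_l ?P"
    unfolding Den_l_def left_denominator_def left_Ore_def using ms ore den by blast
  moreover have "r \<in> S" unfolding S_def I_def using r by auto
  ultimately show ?thesis unfolding left_localizable_def by blast
qed

lemma dir1:
  assumes rings: "\<forall>i<n. ring (R i)" and llm: "\<forall>i<n. left_loc_maximal (R i)"
    and loc: "\<forall>r\<in>carrier (prod_ring n R). r \<noteq> \<zero>\<^bsub>prod_ring n R\<^esub> \<longrightarrow>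
            left_localizable (prod_ring n R) r"
    and k: "k < n"
  shows "division_ring (R k)"
proof -
  let ?P = "prod_ring n R"
  have rg: "\<And>i. i < n \<Longrightarrow> ring (R i)" using rings by auto
  interpret Rk: ring "R k" using rg k by auto
  have carrP: "\<And>f. f \<in> carrier ?P \<longleftrightarrow> (\<forall>i<n. f i \<in> carrier (R i)) \<and> (\<forall>i. i \<ge> n \<longrightarrow> f i = undefined)"
    by (auto simp: P_carrier PiE_def extensional_def)
  have mk: "\<And>f g. (f \<otimes>\<^bsub>?P\<^esub> g) k = f k \<otimes>\<^bsub>R k\<^esub> g k" using k by (simp add: P_mult)
  define L where "L x = (\<lambda>i\<in>{..<n}. if i = k then x else \<zero>\<^bsub>R i\<^esub>)" for x
  have Lc: "\<And>x. x \<in> carrier (R k) \<Longrightarrow> L x \<in> carrier ?P"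
    unfolding L_def carrP using rg by (auto intro: rzero_closed)
  have Lk: "\<And>x. L x k = x" using k unfolding L_def by simp
  have llmk: "left_loc_maximal (R k)" using llm k by auto
  have one0: "\<one>\<^bsub>R k\<^esub> \<noteq> \<zero>\<^bsub>R k\<^esub>"
  proof -
    have "{ass (R k) S | S. S \<in> Den_l (R k)} \<noteq> {}" using llmk unfolding left_loc_maximal_def by simp
    then obtain S where "S \<in> Den_l (R k)" by blast
    thus ?thesis unfolding Den_l_def left_denominator_def left_Ore_def mult_subset_def by auto
  qed
  have units: "carrier (R k) - {\<zero>\<^bsub>R k\<^esub>} \<subseteq> Units (R k)"
  proof
    fix a assume a: "a \<in> carrier (R k) - {\<zero>\<^bsub>R k\<^esub>}"
    have rc: "L a \<in> carrier ?P" using a Lc by auto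
    have rnz: "L a \<noteq> \<zero>\<^bsub>?P\<^esub>"
    proof
      assume "L a = \<zero>\<^bsub>?P\<^esub>"
      hence "L a k = \<zero>\<^bsub>?P\<^esub> k" by simp
      thus False using a k Lk by (simp add: P_zero)
    qed
    obtain S where S: "S \<in> Den_l ?P" and rS: "L a \<in> S"
      using loc rc rnz unfolding left_localizable_def by blast
    have Sd: "left_denominator ?P S" using S unfolding Den_l_def by simp
    have Sm: "mult_subset ?P S" using Sd unfolding left_denominator_def left_Ore_def by simp
    have SP: "S \<subseteq> carrier ?P" using Sm unfolding mult_subset_def by simp
    define Sk where "Sk = (\<lambda>s. s k) ` S"
    have Skc: "Sk \<subseteq> carrier (R k)" unfolding Sk_def using SP k carrP by auto
    have z0: "\<zero>\<^bsub>R k\<^esub> \<notin> Sk"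
    proof
      assume "\<zero>\<^bsub>R k\<^esub> \<in> Sk"
      then obtain s where s: "s \<in> S" "s k = \<zero>\<^bsub>R k\<^esub>" unfolding Sk_def by auto
      have "s \<otimes>\<^bsub>?P\<^esub> L a \<in> S" using Sm s rS unfolding mult_subset_def by blast
      moreover have "s \<otimes>\<^bsub>?P\<^esub> L a = \<zero>\<^bsub>?P\<^esub>"
        unfolding P_mult P_zero
      proof (rule restrict_ext)
        fix i assume i: "i \<in> {..<n}"
        interpret Ri: ring "R i" using rg i by auto
        have "s i \<in> carrier (R i)" using s SP i carrP by auto
        thus "s i \<otimes>\<^bsub>R i\<^esub> L a i = \<zero>\<^bsub>R i\<^esub>" using s a i unfolding L_def by auto
      qed
      ultimately show False using Sm unfolding mult_subset_def by simp
    qed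
    have msk: "mult_subset (R k) Sk"
      unfolding mult_subset_def
    proof (intro conjI ballI)
      show "Sk \<subseteq> carrier (R k)" by (rule Skc)
      have "\<one>\<^bsub>?P\<^esub> \<in> S" using Sm unfolding mult_subset_def by simp
      moreover have "\<one>\<^bsub>?P\<^esub> k = \<one>\<^bsub>R k\<^esub>" using k by (simp add: P_one)
      ultimately show "\<one>\<^bsub>R k\<^esub> \<in> Sk" unfolding Sk_def by (metis image_eqI)
      show "\<zero>\<^bsub>R k\<^esub> \<notin> Sk" by (rule z0)
    next
      fix x y assume "x \<in> Sk" "y \<in> Sk"
      then obtain s t where "s \<in> S" "t \<in> S" "x = s k" "y = t k" unfolding Sk_def by auto
      thus "x \<otimes>\<^bsub>R k\<^esub> y \<in> Sk" using Sm mk unfolding Sk_def mult_subset_def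
        by (metis image_eqI)
    qed
    have orek: "\<forall>x\<in>carrier (R k). \<forall>\<sigma>\<in>Sk. \<exists>s'\<in>Sk. \<exists>x'\<in>carrier (R k). s' \<otimes>\<^bsub>R k\<^esub> x = x' \<otimes>\<^bsub>R k\<^esub> \<sigma>"
    proof (intro ballI)
      fix x \<sigma> assume x: "x \<in> carrier (R k)" and \<sigma>: "\<sigma> \<in> Sk"
      then obtain s where s: "s \<in> S" "\<sigma> = s k" unfolding Sk_def by auto
      obtain s' x' where s': "s' \<in> S" "x' \<in> carrier ?P" "s' \<otimes>\<^bsub>?P\<^esub> L x = x' \<otimes>\<^bsub>?P\<^esub> s"
        using Sd Lc[OF x] s unfolding left_denominator_def left_Ore_def by blast
      have "s' k \<otimes>\<^bsub>R k\<^esub> x = x' k \<otimes>\<^bsub>R k\<^esub> \<sigma>"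
        using arg_cong[OF s'(3), of "\<lambda>f. f k"] mk Lk s by simp
      moreover have "s' k \<in> Sk" using s' unfolding Sk_def by auto
      moreover have "x' k \<in> carrier (R k)" using s' k carrP by auto
      ultimately show "\<exists>s'\<in>Sk. \<exists>x'\<in>carrier (R k). s' \<otimes>\<^bsub>R k\<^esub> x = x' \<otimes>\<^bsub>R k\<^esub> \<sigma>" by blast
    qed
    have denk: "\<forall>x\<in>carrier (R k). \<forall>\<sigma>\<in>Sk. x \<otimes>\<^bsub>R k\<^esub> \<sigma> = \<zero>\<^bsub>R k\<^esub> \<longrightarrow> (\<exists>t\<in>Sk. t \<otimes>\<^bsub>R k\<^esub> x = \<zero>\<^bsub>R k\<^esub>)"
    proof (intro ballI impI)
      fix x \<sigma> assume x: "x \<in> carrier (R k)" and \<sigma>: "\<sigma> \<in> Sk" and z: "x \<otimes>\<^bsub>R k\<^esub> \<sigma> = \<zero>\<^bsub>R k\<^esub>"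
      then obtain s where s: "s \<in> S" "\<sigma> = s k" unfolding Sk_def by auto
      have "L x \<otimes>\<^bsub>?P\<^esub> s = \<zero>\<^bsub>?P\<^esub>"
        unfolding P_mult P_zero
      proof (rule restrict_ext)
        fix i assume i: "i \<in> {..<n}"
        interpret Ri: ring "R i" using rg i by auto
        have "s i \<in> carrier (R i)" using s SP i carrP by auto
        thus "L x i \<otimes>\<^bsub>R i\<^esub> s i = \<zero>\<^bsub>R i\<^esub>" using s z i unfolding L_def by auto
      qed
      then obtain t where t: "t \<in> S" "t \<otimes>\<^bsub>?P\<^esub> L x = \<zero>\<^bsub>?P\<^esub>"
        using Sd Lc[OF x] s unfolding left_denominator_def by blast
      have "t k \<otimes>\<^bsub>R k\<^esub> x = \<zero>\<^bsub>R k\<^esub>"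
        using arg_cong[OF t(2), of "\<lambda>f. f k"] mk Lk k by (simp add: P_zero)
      moreover have "t k \<in> Sk" using t unfolding Sk_def by auto
      ultimately show "\<exists>t\<in>Sk. t \<otimes>\<^bsub>R k\<^esub> x = \<zero>\<^bsub>R k\<^esub>" by blast
    qed
    have Skd: "Sk \<in> Den_l (R k)"
      unfolding Den_l_def left_denominator_def left_Ore_def using msk orek denk by blast
    have assk: "ass (R k) Sk = {\<zero>\<^bsub>R k\<^esub>}" by (rule llm_ass[OF llmk Skd])
    have reg: "Sk \<subseteq> regular_elems (R k)"
    proof
      fix \<sigma> assume \<sigma>: "\<sigma> \<in> Sk"
      have "\<forall>x\<in>carrier (R k). (\<sigma> \<otimes>\<^bsub>R k\<^esub> x = \<zero>\<^bsub>R k\<^esub> \<longrightarrow> x = \<zero>\<^bsub>R k\<^esub>) \<and> (x \<otimes>\<^bsub>R k\<^esub> \<sigma> = \<zero>\<^bsub>R k\<^esub> \<longrightarrow> x = \<zero>\<^bsub>R k\<^esub>)"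
      proof (intro ballI conjI impI)
        fix x assume x: "x \<in> carrier (R k)"
        { assume "\<sigma> \<otimes>\<^bsub>R k\<^esub> x = \<zero>\<^bsub>R k\<^esub>"
          hence "x \<in> ass (R k) Sk" using x \<sigma> unfolding ass_def by blast
          thus "x = \<zero>\<^bsub>R k\<^esub>" using assk by simp }
        { assume "x \<otimes>\<^bsub>R k\<^esub> \<sigma> = \<zero>\<^bsub>R k\<^esub>"
          then obtain t where "t \<in> Sk" "t \<otimes>\<^bsub>R k\<^esub> x = \<zero>\<^bsub>R k\<^esub>" using denk x \<sigma> by blast
          hence "x \<in> ass (R k) Sk" using x unfolding ass_def by blast
          thus "x = \<zero>\<^bsub>R k\<^esub>" using assk by simp }
      qed
      thus "\<sigma> \<in> regular_elems (R k)" using \<sigma> Skc unfolding regular_elems_def by auto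
    qed
    have "Sk \<subseteq> S0 (R k)" unfolding S0_def using msk orek reg
      unfolding left_Ore_def by blast
    moreover have "a \<in> Sk" using rS Lk unfolding Sk_def by (metis image_eqI)
    ultimately show "a \<in> Units (R k)" using llmk unfolding left_loc_maximal_def by blast
  qed
  show ?thesis unfolding division_ring_def using rg k one0 units by blast
qed

theorem corollary2p10:
  fixes R :: "nat \<Rightarrow> ('a, 'b) ring_scheme" and n :: nat
  assumes "\<forall>i<n. ring (R i)"
    and "\<forall>i<n. left_loc_maximal (R i)"
  shows "(\<forall>r\<in>carrier (prod_ring n R). r \<noteq> \<zero>\<^bsub>prod_ring n R\<^esub> \<longrightarrow>
            left_localizable (prod_ring n R) r)
         \<longleftrightarrow> (\<forall>i<n. division_ring (R i))"
  using dir1[OF assms] dir2[OF assms(1)] by blast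

end
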